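(* Let $N=n+k$. The Bethe ansatz equations $$(-1)^n\frac{\Pi(y)}{(1+\beta y_i)^n}\prod_{j=1}^N y_i\ominus t_j+q=0,\qquad i=1,\dots,n,$$ for $y=(y_1,\dots,y_n)$ have $\binom{N}{n}$ pairwise distinct solutions $y_\lambda=(y_{\lambda_n+1},\dots,y_{\lambda_2+n-1},y_{\lambda_1+n})$, $\lambda\subset(k^n)$, whose components are formal power series in $q$ with coefficients rational functions of $t_1,\dots,t_N$ and $\beta$, and, for $i\in I_\lambda$, up to first order in $q$, $$y_i=t_i+q\,(-1)^{n-1}\frac{(1+\beta t_i)^{n+1}}{\Pi(t_\lambda)\prod_{j\neq i}t_i\ominus t_j}+O(q^2),$$ the product running over $j\in\{1,\dots,N\}\setminus\{i\}$.
   Context: $\beta$ indeterminate, $x\ominus y=(x-y)/(1+\beta y)$, $\Pi(y)=\prod_{i=1}^n(1+\beta y_i)$. For $\lambda\subset(k^n)$ (at most $n$ parts, each $\le k$), $I_\lambda=\{\lambda_{n+1-i}+i:1\le i\le n\}$ and $t_\lambda=(t_i)_{i\in I_\lambda}$, $\Pi(t_\lambda)=\prod_{i\in I_\lambda}(1+\beta t_i)$. *)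

theory Defs
  imports "HOL-Library.Poly_Mapping" "HOL-Computational_Algebra.Fraction_Field"
          "HOL-Computational_Algebra.Formal_Power_Series"
begin

text \<open>Polynomials over Q in the variables X_0, X_1, X_2, ... (X_0 plays the role of beta,
  X_i the role of t_i), and their field of fractions K.\<close>
type_synonym mpoly_q = "(nat \<Rightarrow>\<^sub>0 nat) \<Rightarrow>\<^sub>0 rat"
type_synonym ratfun = "mpoly_q fract"

definition Var :: "nat \<Rightarrow> mpoly_q" where
  "Var i = Poly_Mapping.single (Poly_Mapping.single i 1) 1"

definition beta :: ratfun where "beta = Fraction_Field.Fract (Var 0) 1"

definition tt :: "nat \<Rightarrow> ratfun" where "tt i = Fraction_Field.Fract (Var i) 1"

definition ratfun_in :: "nat \<Rightarrow> ratfun \<Rightarrow> bool" where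
  "ratfun_in N c \<longleftrightarrow> (\<exists>(p::mpoly_q) (r::mpoly_q). r \<noteq> 0 \<and> c = Fraction_Field.Fract p r \<and>
      (\<forall>m \<in> Poly_Mapping.keys p \<union> Poly_Mapping.keys r. Poly_Mapping.keys m \<subseteq> {0..N}))"

definition ominus :: "'a::{field} \<Rightarrow> 'a \<Rightarrow> 'a \<Rightarrow> 'a" where
  "ominus b x y = (x - y) / (1 + b * y)"

definition ominus_fps :: "'a::field fps \<Rightarrow> 'a fps \<Rightarrow> 'a fps \<Rightarrow> 'a fps" where
  "ominus_fps b x y = (x - y) / (1 + b * y)"

definition box_partitions :: "nat \<Rightarrow> nat \<Rightarrow> (nat \<Rightarrow> nat) set" where
  "box_partitions n k = {lam. (\<forall>j. (j = 0 \<or> j > n) \<longrightarrow> lam j = 0) \<and>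
      (\<forall>j\<in>{1..n}. lam j \<le> k) \<and> (\<forall>i\<in>{1..n}. \<forall>j\<in>{1..n}. i \<le> j \<longrightarrow> lam j \<le> lam i)}"

definition Iidx :: "nat \<Rightarrow> (nat \<Rightarrow> nat) \<Rightarrow> nat \<Rightarrow> nat" where
  "Iidx n lam j = lam (n + 1 - j) + j"

definition Iset :: "nat \<Rightarrow> (nat \<Rightarrow> nat) \<Rightarrow> nat set" where
  "Iset n lam = Iidx n lam ` {1..n}"

end

theory Submission
  imports Defs
begin

unbundle fps_syntax

definition PN :: "nat \<Rightarrow> mpoly_q \<Rightarrow> bool" where
  "PN N p \<longleftrightarrow> (\<forall>m \<in> Poly_Mapping.keys p. Poly_Mapping.keys m \<subseteq> {0..N})"

lemma PN_0: "PN N 0" by (simp add: PN_def)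
lemma PN_1: "PN N 1" by (simp add: PN_def)
lemma PN_add: "PN N p \<Longrightarrow> PN N q \<Longrightarrow> PN N (p + q)"
  unfolding PN_def using keys_add[of p q] by blast
lemma PN_uminus: "PN N p \<Longrightarrow> PN N (- p)"
  unfolding PN_def by simp
lemma PN_mult: "PN N p \<Longrightarrow> PN N q \<Longrightarrow> PN N (p * q)"
proof -
  assume a: "PN N p" "PN N q"
  show ?thesis unfolding PN_def
  proof
    fix m assume "m \<in> Poly_Mapping.keys (p * q)"
    then obtain a b where ab: "m = a + b" "a \<in> Poly_Mapping.keys p" "b \<in> Poly_Mapping.keys q"
      using keys_mult[of p q] by blast
    have "Poly_Mapping.keys m \<subseteq> Poly_Mapping.keys a \<union> Poly_Mapping.keys b"
      using ab(1) keys_add[of a b] by simp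
    then show "Poly_Mapping.keys m \<subseteq> {0..N}" using a ab unfolding PN_def by blast
  qed
qed
lemma PN_Var: "i \<le> N \<Longrightarrow> PN N (Var i)"
  by (simp add: PN_def Var_def)

lemma ratfun_in_iff: "ratfun_in N c \<longleftrightarrow> (\<exists>p r. r \<noteq> 0 \<and> c = Fraction_Field.Fract p r \<and> PN N p \<and> PN N r)"
  unfolding ratfun_in_def PN_def by blast

lemma ri_0: "ratfun_in N 0"
  unfolding ratfun_in_iff by (rule exI[of _ 0], rule exI[of _ 1]) (simp add: Zero_fract_def PN_0 PN_1)
lemma ri_1: "ratfun_in N 1"
  unfolding ratfun_in_iff by (rule exI[of _ 1], rule exI[of _ 1]) (simp add: One_fract_def PN_1)
lemma ri_add: "ratfun_in N a \<Longrightarrow> ratfun_in N b \<Longrightarrow> ratfun_in N (a + b)"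
proof -
  assume "ratfun_in N a" "ratfun_in N b"
  then obtain p r p' r' where h: "r \<noteq> 0" "a = Fraction_Field.Fract p r" "PN N p" "PN N r"
    "r' \<noteq> 0" "b = Fraction_Field.Fract p' r'" "PN N p'" "PN N r'" unfolding ratfun_in_iff by blast
  show ?thesis unfolding ratfun_in_iff
    by (rule exI[of _ "p * r' + p' * r"], rule exI[of _ "r * r'"]) (simp add: h PN_add PN_mult)
qed
lemma ri_mult: "ratfun_in N a \<Longrightarrow> ratfun_in N b \<Longrightarrow> ratfun_in N (a * b)"
proof -
  assume "ratfun_in N a" "ratfun_in N b"
  then obtain p r p' r' where h: "r \<noteq> 0" "a = Fraction_Field.Fract p r" "PN N p" "PN N r"
    "r' \<noteq> 0" "b = Fraction_Field.Fract p' r'" "PN N p'" "PN N r'" unfolding ratfun_in_iff by blast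
  show ?thesis unfolding ratfun_in_iff
    by (rule exI[of _ "p * p'"], rule exI[of _ "r * r'"]) (simp add: h PN_mult)
qed
lemma ri_uminus: "ratfun_in N a \<Longrightarrow> ratfun_in N (- a)"
proof -
  assume "ratfun_in N a"
  then obtain p r where h: "r \<noteq> 0" "a = Fraction_Field.Fract p r" "PN N p" "PN N r"
    unfolding ratfun_in_iff by blast
  show ?thesis unfolding ratfun_in_iff
    by (rule exI[of _ "- p"], rule exI[of _ "r"]) (simp add: h PN_uminus)
qed
lemma ri_inverse: "ratfun_in N a \<Longrightarrow> ratfun_in N (inverse a)"
proof -
  assume "ratfun_in N a"
  then obtain p r where pr: "r \<noteq> 0" "a = Fraction_Field.Fract p r" "PN N p" "PN N r" unfolding ratfun_in_iff by blast
  show ?thesis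
  proof (cases "p = 0")
    case True
    then have "inverse a = 0" using pr by (simp add: eq_fract Zero_fract_def)
    then show ?thesis using ri_0 by simp
  next
    case False
    then show ?thesis using pr unfolding ratfun_in_iff by auto
  qed
qed
lemma ri_diff: "ratfun_in N a \<Longrightarrow> ratfun_in N b \<Longrightarrow> ratfun_in N (a - b)"
  using ri_add ri_uminus by (metis diff_conv_add_uminus)
lemma ri_divide: "ratfun_in N a \<Longrightarrow> ratfun_in N b \<Longrightarrow> ratfun_in N (a / b)"
  using ri_mult ri_inverse by (metis divide_inverse)
lemma ri_beta: "ratfun_in N beta"
  unfolding ratfun_in_iff beta_def
  by (rule exI[of _ "Var 0"], rule exI[of _ 1]) (simp add: PN_Var PN_1)
lemma ri_tt: "i \<le> N \<Longrightarrow> ratfun_in N (tt i)"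
  unfolding ratfun_in_iff tt_def
  by (rule exI[of _ "Var i"], rule exI[of _ 1]) (simp add: PN_Var PN_1)
lemma ri_sum: "(\<And>x. x \<in> A \<Longrightarrow> ratfun_in N (f x)) \<Longrightarrow> ratfun_in N (sum f A)"
  by (induction A rule: infinite_finite_induct) (auto intro: ri_0 ri_add)
lemma ri_prod: "(\<And>x. x \<in> A \<Longrightarrow> ratfun_in N (f x)) \<Longrightarrow> ratfun_in N (prod f A)"
  by (induction A rule: infinite_finite_induct) (auto intro: ri_1 ri_mult)

lemma Var_inj: "Var i = Var j \<Longrightarrow> i = j"
proof -
  assume h: "Var i = Var j"
  have "Poly_Mapping.lookup (Var i) (Poly_Mapping.single i 1) = Poly_Mapping.lookup (Var j) (Poly_Mapping.single i 1)"
    using h by simp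
  then have "(1::rat) = (1 when Poly_Mapping.single j 1 = Poly_Mapping.single i (1::nat))"
    unfolding Var_def by (simp add: lookup_single)
  then have e: "Poly_Mapping.single j 1 = Poly_Mapping.single i (1::nat)" by (simp add: when_def split: if_splits)
  have "Poly_Mapping.lookup (Poly_Mapping.single j (1::nat)) i = Poly_Mapping.lookup (Poly_Mapping.single i 1) i"
    using e by simp
  then have "(1::nat) = (1 when j = i)" by (simp add: lookup_single)
  then show "i = j" by (simp add: when_def split: if_splits)
qed

lemma tt_inj: "tt i = tt j \<Longrightarrow> i = j"
  unfolding tt_def by (simp add: eq_fract Var_inj)

lemma one_beta_tt: "1 + beta * tt i \<noteq> 0"
proof
  assume h: "1 + beta * tt i = 0"
  have "1 + beta * tt i = Fraction_Field.Fract (1 + Var 0 * Var i) 1"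
    by (simp add: beta_def tt_def One_fract_def)
  then have "1 + Var 0 * Var i = 0" using h by (simp add: eq_fract Zero_fract_def)
  then have "Poly_Mapping.lookup (1 + Var 0 * Var i) 0 = 0" by simp
  moreover
  have a: "Poly_Mapping.single 0 1 + Poly_Mapping.single i 1 \<noteq> (0::nat \<Rightarrow>\<^sub>0 nat)"
  proof
    assume "Poly_Mapping.single 0 1 + Poly_Mapping.single i 1 = (0::nat \<Rightarrow>\<^sub>0 nat)"
    then have "Poly_Mapping.lookup (Poly_Mapping.single 0 1 + Poly_Mapping.single i (1::nat)) 0 = 0" by simp
    then show False by (simp add: lookup_add)
  qed
  have "Poly_Mapping.lookup (Var 0 * Var i) 0 = 0"
    unfolding Var_def mult_single using a by (simp add: lookup_single when_def)
  ultimately show False by (simp add: lookup_add)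
qed


lemma box_zero: "lam \<in> box_partitions n k \<Longrightarrow> j = 0 \<or> j > n \<Longrightarrow> lam j = 0"
proof -
  assume a: "lam \<in> box_partitions n k" and b: "j = 0 \<or> j > n"
  have "\<forall>j. (j = 0 \<or> j > n) \<longrightarrow> lam j = 0" using a unfolding box_partitions_def mem_Collect_eq
    by (rule conjunct1)
  from this[rule_format, OF b] show "lam j = 0" .
qed
lemma box_le: "lam \<in> box_partitions n k \<Longrightarrow> j \<in> {1..n} \<Longrightarrow> lam j \<le> k"
  unfolding box_partitions_def by blast
lemma box_mono: "lam \<in> box_partitions n k \<Longrightarrow> i \<in> {1..n} \<Longrightarrow> j \<in> {1..n} \<Longrightarrow> i \<le> j \<Longrightarrow> lam j \<le> lam i"
  unfolding box_partitions_def by blast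
lemma boxI: "(\<And>j. j = 0 \<or> j > n \<Longrightarrow> lam j = 0) \<Longrightarrow> (\<And>j. j \<in> {1..n} \<Longrightarrow> lam j \<le> k) \<Longrightarrow>
   (\<And>i j. i \<in> {1..n} \<Longrightarrow> j \<in> {1..n} \<Longrightarrow> i \<le> j \<Longrightarrow> lam j \<le> lam i) \<Longrightarrow> lam \<in> box_partitions n k"
  unfolding box_partitions_def by blast

lemma box_0n: "box_partitions 0 k = {\<lambda>_. 0}"
proof (rule set_eqI, rule iffI)
  fix lam assume "lam \<in> box_partitions 0 k"
  then have "lam j = 0" for j using box_zero[of lam 0 k j] by auto
  then show "lam \<in> {\<lambda>_. 0}" by auto
next
  fix lam :: "nat \<Rightarrow> nat" assume "lam \<in> {\<lambda>_. 0}"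
  then show "lam \<in> box_partitions 0 k" by (auto intro!: boxI)
qed

lemma box_n0: "box_partitions n 0 = {\<lambda>_. 0}"
proof (rule set_eqI, rule iffI)
  fix lam assume L: "lam \<in> box_partitions n 0"
  have "lam j = 0" for j
  proof (cases "j \<in> {1..n}")
    case True then show ?thesis using box_le[OF L True] by simp
  next
    case False then have "j = 0 \<or> j > n" by auto
    then show ?thesis by (rule box_zero[OF L])
  qed
  then have "lam = (\<lambda>_. 0)" by (intro ext)
  then show "lam \<in> {\<lambda>_. 0}" by simp
next
  fix lam :: "nat \<Rightarrow> nat" assume "lam \<in> {\<lambda>_. 0}"
  then have "lam = (\<lambda>_. 0)" by simp
  then show "lam \<in> box_partitions n 0" by (auto intro!: boxI)
qed

definition gshift :: "nat \<Rightarrow> (nat \<Rightarrow> nat) \<Rightarrow> nat \<Rightarrow> nat" where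
  "gshift n mu = (\<lambda>j. if j \<in> {1..n} then mu j + 1 else 0)"

lemma box_split:
  "box_partitions (Suc a) (Suc b) = box_partitions a (Suc b) \<union> gshift (Suc a) ` box_partitions (Suc a) b"
proof (rule set_eqI, rule iffI)
  fix lam assume L: "lam \<in> box_partitions (Suc a) (Suc b)"
  show "lam \<in> box_partitions a (Suc b) \<union> gshift (Suc a) ` box_partitions (Suc a) b"
  proof (cases "lam (Suc a) = 0")
    case True
    have z: "lam j = 0" if "j = 0 \<or> j > a" for j
    proof (cases "j = Suc a")
      case True then show ?thesis using \<open>lam (Suc a) = 0\<close> by simp
    next
      case False then have "j = 0 \<or> j > Suc a" using that by auto
      then show ?thesis by (rule box_zero[OF L])
    qed
    have "lam \<in> box_partitions a (Suc b)"
    proof (rule boxI)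
      show "lam j = 0" if "j = 0 \<or> j > a" for j using that by (rule z)
      show "lam j \<le> Suc b" if "j \<in> {1..a}" for j using box_le[OF L, of j] that by simp
      show "lam j \<le> lam i" if "i \<in> {1..a}" "j \<in> {1..a}" "i \<le> j" for i j
        using box_mono[OF L, of i j] that by simp
    qed
    then show ?thesis by blast
  next
    case False
    have pos: "lam j \<ge> 1" if "j \<in> {1..Suc a}" for j
    proof -
      have "lam (Suc a) \<le> lam j" using box_mono[OF L, of j "Suc a"] that by simp
      then show ?thesis using False by simp
    qed
    define mu where "mu = (\<lambda>j. if j \<in> {1..Suc a} then lam j - 1 else 0)"
    have "mu \<in> box_partitions (Suc a) b"
    proof (rule boxI)
      show "mu j = 0" if "j = 0 \<or> j > Suc a" for j using that unfolding mu_def by (elim disjE) simp_all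
      show "mu j \<le> b" if "j \<in> {1..Suc a}" for j using box_le[OF L that] that unfolding mu_def by simp
      show "mu j \<le> mu i" if "i \<in> {1..Suc a}" "j \<in> {1..Suc a}" "i \<le> j" for i j
        using box_mono[OF L that] that unfolding mu_def by simp
    qed
    moreover have "gshift (Suc a) mu = lam"
    proof
      fix j show "gshift (Suc a) mu j = lam j"
      proof (cases "j \<in> {1..Suc a}")
        case True then show ?thesis using pos[OF True] unfolding gshift_def mu_def by simp
      next
        case False then have "j = 0 \<or> j > Suc a" by auto
        then show ?thesis using box_zero[OF L] False unfolding gshift_def by simp
      qed
    qed
    ultimately show ?thesis by blast
  qed
next
  fix lam assume "lam \<in> box_partitions a (Suc b) \<union> gshift (Suc a) ` box_partitions (Suc a) b"
  then show "lam \<in> box_partitions (Suc a) (Suc b)"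
  proof
    assume L: "lam \<in> box_partitions a (Suc b)"
    show ?thesis
    proof (rule boxI)
      show "lam j = 0" if "j = 0 \<or> j > Suc a" for j
      proof (rule box_zero[OF L])
        show "j = 0 \<or> j > a" using that by (elim disjE) simp_all
      qed
      show "lam j \<le> Suc b" if "j \<in> {1..Suc a}" for j
      proof (cases "j = Suc a")
        case True then show ?thesis using box_zero[OF L, of j] by simp
      next
        case False then show ?thesis using box_le[OF L, of j] that by simp
      qed
      show "lam j \<le> lam i" if "i \<in> {1..Suc a}" "j \<in> {1..Suc a}" "i \<le> j" for i j
      proof (cases "j = Suc a")
        case True then show ?thesis using box_zero[OF L, of j] by simp
      next
        case False then show ?thesis using box_mono[OF L, of i j] that by simp
      qed
    qed
  next
    assume "lam \<in> gshift (Suc a) ` box_partitions (Suc a) b"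
    then obtain mu where M: "mu \<in> box_partitions (Suc a) b" and lm: "lam = gshift (Suc a) mu" by blast
    show ?thesis
    proof (rule boxI)
      show "lam j = 0" if "j = 0 \<or> j > Suc a" for j using that unfolding lm gshift_def by (elim disjE) simp_all
      show "lam j \<le> Suc b" if "j \<in> {1..Suc a}" for j using box_le[OF M that] that unfolding lm gshift_def by simp
      show "lam j \<le> lam i" if "i \<in> {1..Suc a}" "j \<in> {1..Suc a}" "i \<le> j" for i j
        using box_mono[OF M that] that unfolding lm gshift_def by simp
    qed
  qed
qed

lemma box_disj: "box_partitions a (Suc b) \<inter> gshift (Suc a) ` box_partitions (Suc a) b = {}"
proof -
  have "lam \<notin> box_partitions a (Suc b)" if "lam \<in> gshift (Suc a) ` box_partitions (Suc a) b" for lam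
  proof
    assume "lam \<in> box_partitions a (Suc b)"
    then have "lam (Suc a) = 0" by (rule box_zero) simp
    moreover have "lam (Suc a) \<noteq> 0" using that unfolding gshift_def by auto
    ultimately show False by simp
  qed
  then show ?thesis by blast
qed

lemma gshift_inj: "inj_on (gshift (Suc a)) (box_partitions (Suc a) b)"
proof (rule inj_onI)
  fix x y assume x: "x \<in> box_partitions (Suc a) b" and y: "y \<in> box_partitions (Suc a) b"
    and e: "gshift (Suc a) x = gshift (Suc a) y"
  show "x = y"
  proof
    fix j show "x j = y j"
    proof (cases "j \<in> {1..Suc a}")
      case True then show ?thesis using fun_cong[OF e, of j] unfolding gshift_def by simp
    next
      case False then show ?thesis using x y unfolding box_partitions_def proof (cases "j = 0")
        case True then show ?thesis using box_zero[OF x, of j] box_zero[OF y, of j] by simp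
      next
        case False then have "j > Suc a" using \<open>j \<notin> {1..Suc a}\<close> by auto
        then show ?thesis using box_zero[OF x, of j] box_zero[OF y, of j] by simp
      qed
    qed
  qed
qed

lemma box_card_step:
  assumes f1: "finite (box_partitions a (Suc b))" and f2': "finite (box_partitions (Suc a) b)"
    and c1: "card (box_partitions a (Suc b)) = (a + Suc b) choose a"
    and c2': "card (box_partitions (Suc a) b) = (Suc a + b) choose Suc a"
  shows "finite (box_partitions (Suc a) (Suc b)) \<and> card (box_partitions (Suc a) (Suc b)) = (Suc a + Suc b) choose Suc a"
proof -
  have f2: "finite (gshift (Suc a) ` box_partitions (Suc a) b)" using f2' by blast
  have c2: "card (gshift (Suc a) ` box_partitions (Suc a) b) = (Suc a + b) choose Suc a"
    using c2' card_image[OF gshift_inj, of a b] by simp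
  have e: "card (box_partitions (Suc a) (Suc b)) =
        card (box_partitions a (Suc b)) + card (gshift (Suc a) ` box_partitions (Suc a) b)"
    unfolding box_split[of a b] by (rule card_Un_disjoint[OF f1 f2 box_disj])
  have e2: "Suc a + Suc b = Suc (a + Suc b)" "Suc a + b = a + Suc b" by simp_all
  have "card (box_partitions (Suc a) (Suc b)) = (Suc a + Suc b) choose Suc a"
    unfolding e c1 c2 e2 binomial_Suc_Suc by simp
  moreover have "finite (box_partitions (Suc a) (Suc b))" using f1 f2 box_split[of a b] by simp
  ultimately show ?thesis by blast
qed

lemma box_card_inner:
  assumes outer: "\<And>k. finite (box_partitions a k) \<and> card (box_partitions a k) = (a + k) choose a"
  shows "finite (box_partitions (Suc a) k) \<and> card (box_partitions (Suc a) k) = (Suc a + k) choose Suc a"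
proof (induction k)
  case 0
  have "card (box_partitions (Suc a) 0) = 1" unfolding box_n0 by simp
  moreover have "finite (box_partitions (Suc a) 0)" unfolding box_n0 by simp
  ultimately show ?case by simp
next
  case (Suc b)
  have A: "finite (box_partitions a (Suc b)) \<and> card (box_partitions a (Suc b)) = (a + Suc b) choose a"
    by (rule outer)
  show ?case
    by (rule box_card_step) (use A Suc.IH in \<open>simp_all\<close>)
qed

lemma box_card_aux: "finite (box_partitions n k) \<and> card (box_partitions n k) = (n + k) choose n"
proof (induction n arbitrary: k)
  case 0 then show ?case by (simp add: box_0n)
next
  case (Suc a)
  then show ?case by (rule box_card_inner)
qed

lemma box_card: "card (box_partitions n k) = (n + k) choose n"
  using box_card_aux[of n k] by (rule conjunct2)
lemma box_finite: "finite (box_partitions n k)"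
  using box_card_aux[of n k] by (rule conjunct1)


definition Zc :: "nat \<Rightarrow> 'a::comm_ring_1 fps \<Rightarrow> bool" where
  "Zc m d \<longleftrightarrow> (\<forall>t<m. d $ t = 0)"

lemma Zc_mult_left: "Zc m d \<Longrightarrow> Zc m (e * d)"
  unfolding Zc_def fps_mult_nth by (auto intro!: sum.neutral)
lemma Zc_mult_right: "Zc m d \<Longrightarrow> Zc m (d * e)"
  using Zc_mult_left[of m d e] by (simp add: mult.commute)
lemma Zc_add: "Zc m d \<Longrightarrow> Zc m e \<Longrightarrow> Zc m (d + e)"
  unfolding Zc_def by simp
lemma Zc_0: "Zc m 0" unfolding Zc_def by simp
lemma Zc_X: "Zc m d \<Longrightarrow> Zc (Suc m) (fps_X * d)"
  unfolding Zc_def by simp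

definition eqm :: "nat \<Rightarrow> 'a::comm_ring_1 fps \<Rightarrow> 'a fps \<Rightarrow> bool" where
  "eqm m a b \<longleftrightarrow> Zc m (a - b)"

lemma eqm_iff: "eqm m a b \<longleftrightarrow> (\<forall>t<m. a $ t = b $ t)"
  unfolding eqm_def Zc_def by simp
lemma eqm_refl: "eqm m a a" unfolding eqm_iff by simp
lemma eqm_0: "eqm 0 a b" unfolding eqm_iff by simp
lemma eqm_sym: "eqm m a b \<Longrightarrow> eqm m b a" unfolding eqm_iff by simp
lemma eqm_trans: "eqm m a b \<Longrightarrow> eqm m b c \<Longrightarrow> eqm m a c" unfolding eqm_iff by simp
lemma eqm_mono: "eqm m a b \<Longrightarrow> m' \<le> m \<Longrightarrow> eqm m' a b" unfolding eqm_iff by simp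
lemma eqm_add: "eqm m a b \<Longrightarrow> eqm m c d \<Longrightarrow> eqm m (a + c) (b + d)" unfolding eqm_iff by simp
lemma eqm_diff: "eqm m a b \<Longrightarrow> eqm m c d \<Longrightarrow> eqm m (a - c) (b - d)" unfolding eqm_iff by simp
lemma eqm_mult: "eqm m a b \<Longrightarrow> eqm m c d \<Longrightarrow> eqm m (a * c) (b * d)"
proof -
  assume h: "eqm m a b" "eqm m c d"
  have "a * c - b * d = a * (c - d) + (a - b) * d" by (simp add: algebra_simps)
  then show ?thesis using h unfolding eqm_def by (simp add: Zc_add Zc_mult_left Zc_mult_right)
qed
lemma eqm_X: "eqm m a b \<Longrightarrow> eqm (Suc m) (fps_X * a) (fps_X * b)"
proof -
  assume "eqm m a b"
  then have "Zc (Suc m) (fps_X * (a - b))" unfolding eqm_def by (rule Zc_X)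
  then show ?thesis unfolding eqm_def by (simp add: algebra_simps)
qed
lemma eqm_prod: "(\<And>x. x \<in> A \<Longrightarrow> eqm m (f x) (g x)) \<Longrightarrow> eqm m (prod f A) (prod g A)"
  by (induction A rule: infinite_finite_induct) (auto intro: eqm_refl eqm_mult)
lemma eqm_power: "eqm m a b \<Longrightarrow> eqm m (a ^ k) (b ^ k)"
  by (induction k) (auto intro: eqm_refl eqm_mult)
lemma eqm_inverse:
  fixes a b :: "'a::field fps"
  assumes "eqm m a b" "a $ 0 \<noteq> 0" "b $ 0 \<noteq> 0"
  shows "eqm m (inverse a) (inverse b)"
proof -
  have "inverse a - inverse b = (inverse a * inverse b) * (b - a)"
  proof -
    have "(inverse a * inverse b) * (b - a) = inverse a * (inverse b * b) - (inverse a * a) * inverse b"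
      by (simp add: algebra_simps)
    also have "\<dots> = inverse a - inverse b" using assms(2,3) by (simp add: inverse_mult_eq_1)
    finally show ?thesis by simp
  qed
  moreover have "Zc m (b - a)" using eqm_sym[OF assms(1)] unfolding eqm_def .
  ultimately show ?thesis unfolding eqm_def by (simp add: Zc_mult_left)
qed

lemma fps_prod_nth0: "(prod f A) $ 0 = prod (\<lambda>x. f x $ 0) A"
  by (induction A rule: infinite_finite_induct) auto

locale coeffpred =
  fixes P :: "'a::field \<Rightarrow> bool"
  assumes P0: "P 0" and P1: "P 1" and Padd: "P a \<Longrightarrow> P b \<Longrightarrow> P (a + b)"
    and Pmult: "P a \<Longrightarrow> P b \<Longrightarrow> P (a * b)" and Puminus: "P a \<Longrightarrow> P (- a)"
    and Pinverse: "P a \<Longrightarrow> P (inverse a)"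
begin

definition Q :: "'a fps \<Rightarrow> bool" where "Q f \<longleftrightarrow> (\<forall>t. P (f $ t))"

lemma Psum: "(\<And>x. x \<in> A \<Longrightarrow> P (f x)) \<Longrightarrow> P (sum f A)"
  by (induction A rule: infinite_finite_induct) (auto intro: P0 Padd)
lemma Pprod: "(\<And>x. x \<in> A \<Longrightarrow> P (f x)) \<Longrightarrow> P (prod f A)"
  by (induction A rule: infinite_finite_induct) (auto intro: P1 Pmult)

lemma Q_const: "P c \<Longrightarrow> Q (fps_const c)" unfolding Q_def by (auto intro: P0)
lemma Q_0: "Q 0" unfolding Q_def by (auto intro: P0)
lemma Q_1: "Q 1" unfolding Q_def by (auto intro: P0 P1)
lemma Q_X: "Q fps_X" unfolding Q_def by (auto intro: P0 P1)
lemma Q_add: "Q f \<Longrightarrow> Q g \<Longrightarrow> Q (f + g)" unfolding Q_def by (auto intro: Padd)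
lemma Q_uminus: "Q f \<Longrightarrow> Q (- f)" unfolding Q_def by (auto intro: Puminus)
lemma Q_diff: "Q f \<Longrightarrow> Q g \<Longrightarrow> Q (f - g)"
  using Q_add Q_uminus by (metis diff_conv_add_uminus)
lemma Q_mult: "Q f \<Longrightarrow> Q g \<Longrightarrow> Q (f * g)"
  unfolding Q_def fps_mult_nth by (auto intro!: Psum Pmult)
lemma Q_prod: "(\<And>x. x \<in> A \<Longrightarrow> Q (f x)) \<Longrightarrow> Q (prod f A)"
  by (induction A rule: infinite_finite_induct) (auto intro: Q_1 Q_mult)
lemma Q_power: "Q f \<Longrightarrow> Q (f ^ k)"
  by (induction k) (auto intro: Q_1 Q_mult)
lemma Q_inverse: "Q f \<Longrightarrow> Q (inverse f)"
proof -
  assume q: "Q f"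
  have "P (natfun_inverse f t)" for t
  proof (induction t rule: less_induct)
    case (less t)
    show ?case
    proof (cases t)
      case 0 then show ?thesis using q unfolding Q_def by (simp add: Pinverse)
    next
      case (Suc s)
      have "natfun_inverse f t = - inverse (f $ 0) * sum (\<lambda>i. f $ i * natfun_inverse f (t - i)) {1..t}"
        using Suc by simp
      moreover have "P (sum (\<lambda>i. f $ i * natfun_inverse f (t - i)) {1..t})"
      proof (rule Psum)
        fix i assume i: "i \<in> {1..t}"
        have a: "P (f $ i)" using q unfolding Q_def by blast
        have b: "P (natfun_inverse f (t - i))" by (rule less.IH) (use i in auto)
        show "P (f $ i * natfun_inverse f (t - i))" using Pmult[OF a b] .
      qed
      ultimately show ?thesis using q unfolding Q_def by (auto intro: Pmult Puminus Pinverse)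
    qed
  qed
  then show ?thesis unfolding Q_def fps_inverse_def by simp
qed

end


abbreviation BB :: "ratfun fps" where "BB \<equiv> fps_const beta"
abbreviation TT :: "nat \<Rightarrow> ratfun fps" where "TT j \<equiv> fps_const (tt j)"

definition Gf :: "nat \<Rightarrow> nat \<Rightarrow> (nat \<Rightarrow> nat) \<Rightarrow> (nat \<Rightarrow> ratfun fps) \<Rightarrow> nat \<Rightarrow> ratfun fps" where
  "Gf n N p y i = (-1) ^ n * (\<Prod>l\<in>{1..n}. 1 + BB * y l) * inverse ((1 + BB * y i) ^ n)
     * (\<Prod>j\<in>{1..N} - {p i}. (y i - TT j) * inverse (1 + BB * TT j)) * inverse (1 + BB * TT (p i))"

definition g0 :: "nat \<Rightarrow> nat \<Rightarrow> (nat \<Rightarrow> nat) \<Rightarrow> nat \<Rightarrow> ratfun" where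
  "g0 n N p i = (-1) ^ n * (\<Prod>l\<in>{1..n}. 1 + beta * tt (p l)) * inverse ((1 + beta * tt (p i)) ^ n)
     * (\<Prod>j\<in>{1..N} - {p i}. (tt (p i) - tt j) * inverse (1 + beta * tt j)) * inverse (1 + beta * tt (p i))"

lemma Gf_0:
  assumes "\<forall>l\<in>{1..n}. y l $ 0 = tt (p l)" "i \<in> {1..n}"
  shows "Gf n N p y i $ 0 = g0 n N p i"
proof -
  have a: "(\<Prod>l\<in>{1..n}. 1 + BB * y l) $ 0 = (\<Prod>l\<in>{1..n}. 1 + beta * tt (p l))"
    unfolding fps_prod_nth0 using assms(1) by (intro prod.cong) simp_all
  have b: "(\<Prod>j\<in>{1..N} - {p i}. (y i - TT j) * inverse (1 + BB * TT j)) $ 0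
      = (\<Prod>j\<in>{1..N} - {p i}. (tt (p i) - tt j) * inverse (1 + beta * tt j))"
    unfolding fps_prod_nth0 using assms by (intro prod.cong) simp_all
  have c: "((-1::ratfun fps) ^ n) $ 0 = (-1) ^ n" by (simp add: fps_power_zeroth)
  have d: "inverse ((1 + BB * y i) ^ n) $ 0 = inverse ((1 + beta * tt (p i)) ^ n)"
    using assms by (simp add: fps_power_zeroth)
  show ?thesis unfolding Gf_def g0_def fps_mult_nth_0 a b c d by simp
qed

lemma g0_nz: "g0 n N p i \<noteq> 0"
proof -
  have "(\<Prod>l\<in>{1..n}. 1 + beta * tt (p l)) \<noteq> 0" using one_beta_tt by (simp add: prod_zero_iff)
  moreover have "(\<Prod>j\<in>{1..N} - {p i}. (tt (p i) - tt j) * inverse (1 + beta * tt j)) \<noteq> 0"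
  proof -
    have "(tt (p i) - tt j) * inverse (1 + beta * tt j) \<noteq> 0" if "j \<in> {1..N} - {p i}" for j
    proof -
      have "tt (p i) \<noteq> tt j" using that tt_inj by blast
      then show ?thesis using one_beta_tt[of j] by simp
    qed
    then show ?thesis by (simp add: prod_zero_iff)
  qed
  ultimately show ?thesis unfolding g0_def using one_beta_tt[of "p i"] by simp
qed

definition Phi :: "nat \<Rightarrow> nat \<Rightarrow> (nat \<Rightarrow> nat) \<Rightarrow> (nat \<Rightarrow> ratfun fps) \<Rightarrow> nat \<Rightarrow> ratfun fps" where
  "Phi n N p y = (\<lambda>i. TT (p i) - fps_X * inverse (Gf n N p y i))"

definition Yseq :: "nat \<Rightarrow> nat \<Rightarrow> (nat \<Rightarrow> nat) \<Rightarrow> nat \<Rightarrow> nat \<Rightarrow> ratfun fps" where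
  "Yseq n N p m = (Phi n N p ^^ m) (\<lambda>i. TT (p i))"

definition Ylim :: "nat \<Rightarrow> nat \<Rightarrow> (nat \<Rightarrow> nat) \<Rightarrow> nat \<Rightarrow> ratfun fps" where
  "Ylim n N p = (\<lambda>i. Abs_fps (\<lambda>t. Yseq n N p (Suc t) i $ t))"

lemma Phi_0: "Phi n N p y i $ 0 = tt (p i)" by (simp add: Phi_def)
lemma Yseq_0: "Yseq n N p m i $ 0 = tt (p i)" by (cases m) (simp_all add: Yseq_def Phi_0)
lemma Yseq_Suc: "Yseq n N p (Suc m) = Phi n N p (Yseq n N p m)" by (simp add: Yseq_def)

lemma Gf_eqm:
  assumes y0: "\<forall>l\<in>{1..n}. y l $ 0 = tt (p l)" and z0: "\<forall>l\<in>{1..n}. z l $ 0 = tt (p l)"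
    and yz: "\<forall>l\<in>{1..n}. eqm m (y l) (z l)" and i: "i \<in> {1..n}"
  shows "eqm m (Gf n N p y i) (Gf n N p z i)"
proof -
  have yi: "eqm m (y i) (z i)" using yz i by blast
  have e1: "eqm m (\<Prod>l\<in>{1..n}. 1 + BB * y l) (\<Prod>l\<in>{1..n}. 1 + BB * z l)"
    by (rule eqm_prod, rule eqm_add, rule eqm_refl, rule eqm_mult, rule eqm_refl) (use yz in blast)
  have e2: "eqm m (inverse ((1 + BB * y i) ^ n)) (inverse ((1 + BB * z i) ^ n))"
  proof (rule eqm_inverse)
    show "eqm m ((1 + BB * y i) ^ n) ((1 + BB * z i) ^ n)"
      by (intro eqm_power eqm_add eqm_refl eqm_mult yi)
    show "(1 + BB * y i) ^ n $ 0 \<noteq> 0" using y0 i one_beta_tt by (simp add: fps_power_zeroth)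
    show "(1 + BB * z i) ^ n $ 0 \<noteq> 0" using z0 i one_beta_tt by (simp add: fps_power_zeroth)
  qed
  have e3: "eqm m (\<Prod>j\<in>{1..N} - {p i}. (y i - TT j) * inverse (1 + BB * TT j))
                  (\<Prod>j\<in>{1..N} - {p i}. (z i - TT j) * inverse (1 + BB * TT j))"
    by (rule eqm_prod, rule eqm_mult, rule eqm_diff, rule yi, rule eqm_refl, rule eqm_refl)
  show ?thesis unfolding Gf_def
    by (rule eqm_mult, rule eqm_mult, rule eqm_mult, rule eqm_mult, rule eqm_refl, rule e1, rule e2, rule e3, rule eqm_refl)
qed

lemma Phi_contract:
  assumes y0: "\<forall>l\<in>{1..n}. y l $ 0 = tt (p l)" and z0: "\<forall>l\<in>{1..n}. z l $ 0 = tt (p l)"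
    and yz: "\<forall>l\<in>{1..n}. eqm m (y l) (z l)" and i: "i \<in> {1..n}"
  shows "eqm (Suc m) (Phi n N p y i) (Phi n N p z i)"
  unfolding Phi_def
proof (rule eqm_diff, rule eqm_refl, rule eqm_X, rule eqm_inverse)
  show "eqm m (Gf n N p y i) (Gf n N p z i)" by (rule Gf_eqm[OF y0 z0 yz i])
  show "Gf n N p y i $ 0 \<noteq> 0" using Gf_0[OF y0 i] g0_nz by simp
  show "Gf n N p z i $ 0 \<noteq> 0" using Gf_0[OF z0 i] g0_nz by simp
qed

lemma Yseq_step: "\<forall>i\<in>{1..n}. eqm m (Yseq n N p m i) (Yseq n N p (Suc m) i)"
proof (induction m)
  case 0 then show ?case by (simp add: eqm_0)
next
  case (Suc m)
  show ?case
  proof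
    fix i assume i: "i \<in> {1..n}"
    show "eqm (Suc m) (Yseq n N p (Suc m) i) (Yseq n N p (Suc (Suc m)) i)"
    proof -
      have "eqm (Suc m) (Phi n N p (Yseq n N p m) i) (Phi n N p (Yseq n N p (Suc m)) i)"
        by (rule Phi_contract[OF _ _ Suc.IH i]) (simp_all add: Yseq_0)
      then show ?thesis unfolding Yseq_Suc .
    qed
  qed
qed

lemma Yseq_mono: "m \<le> m' \<Longrightarrow> i \<in> {1..n} \<Longrightarrow> eqm m (Yseq n N p m i) (Yseq n N p m' i)"
proof (induction m' rule: dec_induct)
  case base show ?case by (rule eqm_refl)
next
  case (step m')
  have "eqm m (Yseq n N p m' i) (Yseq n N p (Suc m') i)"
    using Yseq_step[of n m' N p] step.prems step.hyps(1) eqm_mono by blast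
  then show ?case using step.IH step.prems eqm_trans by blast
qed

lemma Ylim_eqm: "i \<in> {1..n} \<Longrightarrow> eqm m (Ylim n N p i) (Yseq n N p m i)"
  unfolding eqm_iff
proof (intro allI impI)
  fix t assume i: "i \<in> {1..n}" and t: "t < m"
  have "eqm (Suc t) (Yseq n N p (Suc t) i) (Yseq n N p m i)" using Yseq_mono[of "Suc t" m i n N p] t i by simp
  then have "Yseq n N p (Suc t) i $ t = Yseq n N p m i $ t" unfolding eqm_iff by simp
  then show "Ylim n N p i $ t = Yseq n N p m i $ t" unfolding Ylim_def by simp
qed

lemma Ylim_0: "Ylim n N p i $ 0 = tt (p i)"
  unfolding Ylim_def by (simp add: Yseq_0)

lemma Ylim_fix: assumes i: "i \<in> {1..n}" shows "Ylim n N p i = Phi n N p (Ylim n N p) i"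
proof (rule fps_ext)
  fix t
  have a: "eqm (Suc t) (Ylim n N p i) (Yseq n N p (Suc t) i)" by (rule Ylim_eqm[OF i])
  have b: "eqm (Suc t) (Phi n N p (Ylim n N p) i) (Phi n N p (Yseq n N p t) i)"
  proof (rule Phi_contract[OF _ _ _ i])
    show "\<forall>l\<in>{1..n}. Ylim n N p l $ 0 = tt (p l)" by (simp add: Ylim_0)
    show "\<forall>l\<in>{1..n}. Yseq n N p t l $ 0 = tt (p l)" by (simp add: Yseq_0)
    show "\<forall>l\<in>{1..n}. eqm t (Ylim n N p l) (Yseq n N p t l)" using Ylim_eqm by blast
  qed
  have "eqm (Suc t) (Ylim n N p i) (Phi n N p (Ylim n N p) i)"
    using a b unfolding Yseq_Suc by (metis eqm_sym eqm_trans)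
  then show "Ylim n N p i $ t = Phi n N p (Ylim n N p) i $ t" unfolding eqm_iff by simp
qed


lemma cp: "coeffpred (ratfun_in N)"
  by unfold_locales (auto intro: ri_0 ri_1 ri_add ri_mult ri_uminus ri_inverse)

lemma Yseq_Q:
  assumes pN: "\<forall>i\<in>{1..n}. p i \<le> N"
  shows "\<forall>i\<in>{1..n}. coeffpred.Q (ratfun_in N) (Yseq n N p m i)"
proof -
  interpret R: coeffpred "ratfun_in N" by (rule cp)
  show ?thesis
  proof (induction m)
    case 0
    show ?case unfolding Yseq_def using pN by (auto intro!: R.Q_const ri_tt)
  next
    case (Suc m)
    show ?case
    proof
      fix i assume i: "i \<in> {1..n}"
      have G: "R.Q (Gf n N p (Yseq n N p m) i)"
        unfolding Gf_def
        by (intro R.Q_mult R.Q_power R.Q_inverse R.Q_prod R.Q_add R.Q_diff R.Q_uminus R.Q_1 R.Q_const ri_beta ri_tt)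
           (use Suc.IH i pN in auto)
      show "R.Q (Yseq n N p (Suc m) i)"
        unfolding Yseq_Suc Phi_def
        by (intro R.Q_diff R.Q_mult R.Q_X R.Q_inverse R.Q_const ri_tt G) (use i pN in auto)
    qed
  qed
qed

lemma Ylim_ratfun:
  assumes pN: "\<forall>i\<in>{1..n}. p i \<le> N" and i: "i \<in> {1..n}"
  shows "ratfun_in N (Ylim n N p i $ t)"
proof -
  interpret R: coeffpred "ratfun_in N" by (rule cp)
  have "R.Q (Yseq n N p (Suc t) i)" using Yseq_Q[OF pN] i by blast
  then show ?thesis unfolding Ylim_def R.Q_def by simp
qed

lemma Ylim_eq:
  assumes i: "i \<in> {1..n}" and pi: "p i \<in> {1..N}"
  shows "(-1) ^ n * (\<Prod>l\<in>{1..n}. 1 + BB * Ylim n N p l) / (1 + BB * Ylim n N p i) ^ n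
      * (\<Prod>j\<in>{1..N}. ominus_fps BB (Ylim n N p i) (TT j)) + fps_X = 0"
proof -
  define Y where "Y = Ylim n N p"
  define G where "G = Gf n N p Y i"
  have Y0: "\<forall>l\<in>{1..n}. Y l $ 0 = tt (p l)" unfolding Y_def by (simp add: Ylim_0)
  have G0: "G $ 0 \<noteq> 0" unfolding G_def using Gf_0[OF Y0 i] g0_nz by simp
  have fx: "Y i - TT (p i) = - (fps_X * inverse G)"
    using Ylim_fix[OF i, of N p] unfolding Y_def[symmetric] G_def Phi_def by (simp add: algebra_simps)
  have d1: "(-1) ^ n * (\<Prod>l\<in>{1..n}. 1 + BB * Y l) / (1 + BB * Y i) ^ n
      = (-1) ^ n * (\<Prod>l\<in>{1..n}. 1 + BB * Y l) * inverse ((1 + BB * Y i) ^ n)"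
    by (rule fps_divide_unit) (use Y0 i one_beta_tt in \<open>simp add: fps_power_zeroth\<close>)
  have d2: "ominus_fps BB (Y i) (TT j) = (Y i - TT j) * inverse (1 + BB * TT j)" for j
    unfolding ominus_fps_def by (rule fps_divide_unit) (simp add: one_beta_tt)
  have sp: "(\<Prod>j\<in>{1..N}. (Y i - TT j) * inverse (1 + BB * TT j))
      = ((Y i - TT (p i)) * inverse (1 + BB * TT (p i))) * (\<Prod>j\<in>{1..N} - {p i}. (Y i - TT j) * inverse (1 + BB * TT j))"
    using pi by (simp add: prod.remove)
  have "(-1) ^ n * (\<Prod>l\<in>{1..n}. 1 + BB * Y l) / (1 + BB * Y i) ^ n
      * (\<Prod>j\<in>{1..N}. ominus_fps BB (Y i) (TT j)) = G * (Y i - TT (p i))"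
    unfolding d1 d2 sp G_def Gf_def by (simp add: ac_simps)
  also have "\<dots> = - fps_X * (G * inverse G)" unfolding fx by (simp add: ac_simps)
  also have "\<dots> = - fps_X" using inverse_mult_eq_1'[OF G0] by simp
  finally show ?thesis unfolding Y_def by simp
qed

lemma Ylim_coeff1:
  assumes i: "i \<in> {1..n}"
  shows "Ylim n N p i $ 1 = - inverse (g0 n N p i)"
proof -
  define Y where "Y = Ylim n N p"
  have Y0: "\<forall>l\<in>{1..n}. Y l $ 0 = tt (p l)" unfolding Y_def by (simp add: Ylim_0)
  have "Y i $ 1 = Phi n N p Y i $ 1" unfolding Y_def using Ylim_fix[OF i] by metis
  also have "\<dots> = - inverse (Gf n N p Y i $ 0)" unfolding Phi_def by simp
  also have "\<dots> = - inverse (g0 n N p i)" using Gf_0[OF Y0 i] by simp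
  finally show ?thesis unfolding Y_def .
qed

lemma inv_formula:
  fixes D P1 P2 :: ratfun
  assumes "D \<noteq> 0" "P1 \<noteq> 0" "P2 \<noteq> 0"
  shows "- inverse ((-1) ^ Suc m * P1 * inverse (D ^ Suc m) * P2 * inverse D)
       = (-1) ^ m * D ^ (Suc m + 1) / (P1 * P2)"
proof -
  have s: "((-1::ratfun) ^ m) * (-1) ^ m = 1"
    by (simp add: power_add[symmetric])
  have "(-1) ^ Suc m * P1 * inverse (D ^ Suc m) * P2 * inverse D = - ((-1) ^ m * P1 * P2 / D ^ (Suc m + 1))"
    using assms by (simp add: field_simps)
  then have "- inverse ((-1) ^ Suc m * P1 * inverse (D ^ Suc m) * P2 * inverse D)
      = inverse ((-1) ^ m * P1 * P2 / D ^ (Suc m + 1))" by (simp add: inverse_minus_eq)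
  also have "\<dots> = D ^ (Suc m + 1) / ((-1) ^ m * (P1 * P2))" by (simp add: field_simps)
  also have "\<dots> = (-1) ^ m * D ^ (Suc m + 1) / (P1 * P2)"
    using s assms by (simp add: field_simps)
  finally show ?thesis .
qed


lemma Iidx_range:
  assumes L: "lam \<in> box_partitions n k" and j: "j \<in> {1..n}"
  shows "Iidx n lam j \<in> {1..n + k}"
proof -
  have "n + 1 - j \<in> {1..n}" using j by auto
  then have "lam (n + 1 - j) \<le> k" by (rule box_le[OF L])
  then show ?thesis using j unfolding Iidx_def by auto
qed

lemma Iidx_strict:
  assumes L: "lam \<in> box_partitions n k" and i: "i \<in> {1..n}" and j: "j \<in> {1..n}" and ij: "i < j"
  shows "Iidx n lam i < Iidx n lam j"
proof -
  have "lam (n + 1 - i) \<le> lam (n + 1 - j)"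
    by (rule box_mono[OF L]) (use i j ij in auto)
  then show ?thesis unfolding Iidx_def using ij by simp
qed

lemma Iidx_inj: "lam \<in> box_partitions n k \<Longrightarrow> inj_on (Iidx n lam) {1..n}"
  by (rule inj_onI, metis Iidx_strict less_irrefl nat_neq_iff)

lemma Iidx_determines:
  assumes L1: "lam1 \<in> box_partitions n k" and L2: "lam2 \<in> box_partitions n k"
    and e: "\<forall>j\<in>{1..n}. Iidx n lam1 j = Iidx n lam2 j"
  shows "lam1 = lam2"
proof
  fix x show "lam1 x = lam2 x"
  proof (cases "x \<in> {1..n}")
    case True
    then have j: "n + 1 - x \<in> {1..n}" by auto
    have "n + 1 - (n + 1 - x) = x" using True by auto
    then show ?thesis using e j unfolding Iidx_def by (metis add_right_cancel)
  next
    case False then have "x = 0 \<or> x > n" by auto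
    then show ?thesis using box_zero[OF L1] box_zero[OF L2] by simp
  qed
qed

theorem mainTheorem8:
  fixes n k N :: nat
  assumes "N = n + k"
  shows "card (box_partitions n k) = N choose n \<and>
    (\<exists>Y :: (nat \<Rightarrow> nat) \<Rightarrow> nat \<Rightarrow> ratfun fps.
      (\<forall>lam \<in> box_partitions n k.
         (\<forall>j\<in>{1..n}. \<forall>m. ratfun_in N (fps_nth (Y lam j) m)) \<and>
         (\<forall>i\<in>{1..n}.
            (-1) ^ n * (\<Prod>l\<in>{1..n}. 1 + fps_const beta * Y lam l)
              / (1 + fps_const beta * Y lam i) ^ n
              * (\<Prod>j\<in>{1..N}. ominus_fps (fps_const beta) (Y lam i) (fps_const (tt j)))
            + fps_X = 0) \<and>
         (\<forall>j\<in>{1..n}.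
            fps_nth (Y lam j) 0 = tt (Iidx n lam j) \<and>
            fps_nth (Y lam j) 1 =
              (-1) ^ (n - 1) * (1 + beta * tt (Iidx n lam j)) ^ (n + 1)
              / ((\<Prod>i'\<in>Iset n lam. 1 + beta * tt i') *
                 (\<Prod>j'\<in>{1..N} - {Iidx n lam j}. ominus beta (tt (Iidx n lam j)) (tt j'))))) \<and>
      (\<forall>lam1 \<in> box_partitions n k. \<forall>lam2 \<in> box_partitions n k.
         lam1 \<noteq> lam2 \<longrightarrow> (\<exists>j\<in>{1..n}. Y lam1 j \<noteq> Y lam2 j)))"
proof -
  define Y where "Y = (\<lambda>lam. Ylim n N (Iidx n lam))"
  have part1: "card (box_partitions n k) = N choose n" using assms box_card by simp
  have part2: "(\<forall>j\<in>{1..n}. \<forall>m. ratfun_in N (fps_nth (Y lam j) m)) \<and>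
         (\<forall>i\<in>{1..n}.
            (-1) ^ n * (\<Prod>l\<in>{1..n}. 1 + fps_const beta * Y lam l)
              / (1 + fps_const beta * Y lam i) ^ n
              * (\<Prod>j\<in>{1..N}. ominus_fps (fps_const beta) (Y lam i) (fps_const (tt j)))
            + fps_X = 0) \<and>
         (\<forall>j\<in>{1..n}.
            fps_nth (Y lam j) 0 = tt (Iidx n lam j) \<and>
            fps_nth (Y lam j) 1 =
              (-1) ^ (n - 1) * (1 + beta * tt (Iidx n lam j)) ^ (n + 1)
              / ((\<Prod>i'\<in>Iset n lam. 1 + beta * tt i') *
                 (\<Prod>j'\<in>{1..N} - {Iidx n lam j}. ominus beta (tt (Iidx n lam j)) (tt j'))))"
    if L: "lam \<in> box_partitions n k" for lam
  proof (intro conjI ballI allI)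
    let ?p = "Iidx n lam"
    have pN: "\<forall>i\<in>{1..n}. ?p i \<le> N" using Iidx_range[OF L] assms by auto
    have pR: "?p i \<in> {1..N}" if "i \<in> {1..n}" for i using Iidx_range[OF L that] assms by simp
    fix j m assume j: "j \<in> {1..n}"
    show "ratfun_in N (Y lam j $ m)" unfolding Y_def by (rule Ylim_ratfun[OF pN j])
  next
    let ?p = "Iidx n lam"
    fix i assume i: "i \<in> {1..n}"
    have pR: "?p i \<in> {1..N}" using Iidx_range[OF L i] assms by simp
    show "(-1) ^ n * (\<Prod>l\<in>{1..n}. 1 + fps_const beta * Y lam l)
              / (1 + fps_const beta * Y lam i) ^ n
              * (\<Prod>j\<in>{1..N}. ominus_fps (fps_const beta) (Y lam i) (fps_const (tt j)))
            + fps_X = 0" unfolding Y_def by (rule Ylim_eq[of i n "Iidx n lam" N, OF i pR])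
  next
    fix j assume j: "j \<in> {1..n}"
    show "Y lam j $ 0 = tt (Iidx n lam j)" unfolding Y_def by (rule Ylim_0)
  next
    let ?p = "Iidx n lam"
    fix j assume j: "j \<in> {1..n}"
    obtain m where nm: "n = Suc m" using j by (cases n) auto
    define D where "D = 1 + beta * tt (?p j)"
    define P1 where "P1 = (\<Prod>l\<in>{1..n}. 1 + beta * tt (?p l))"
    define P2 where "P2 = (\<Prod>j'\<in>{1..N} - {?p j}. (tt (?p j) - tt j') * inverse (1 + beta * tt j'))"
    have P1': "P1 = (\<Prod>i'\<in>Iset n lam. 1 + beta * tt i')"
      unfolding P1_def Iset_def by (rule prod.reindex[OF Iidx_inj[OF L], symmetric, unfolded comp_def])
    have P2': "P2 = (\<Prod>j'\<in>{1..N} - {?p j}. ominus beta (tt (?p j)) (tt j'))"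
      unfolding P2_def ominus_def by (simp add: divide_inverse)
    have Dnz: "D \<noteq> 0" unfolding D_def by (rule one_beta_tt)
    have P1nz: "P1 \<noteq> 0" unfolding P1_def using one_beta_tt by (simp add: prod_zero_iff)
    have P2nz: "P2 \<noteq> 0"
    proof -
      have "(tt (?p j) - tt j') * inverse (1 + beta * tt j') \<noteq> 0" if "j' \<in> {1..N} - {?p j}" for j'
      proof -
        have "tt (?p j) \<noteq> tt j'" using that tt_inj by blast
        then show ?thesis using one_beta_tt[of j'] by simp
      qed
      then show ?thesis unfolding P2_def by (simp add: prod_zero_iff)
    qed
    have g: "g0 n N ?p j = (-1) ^ Suc m * P1 * inverse (D ^ Suc m) * P2 * inverse D"
      unfolding g0_def P1_def P2_def D_def nm ..
    have "Y lam j $ 1 = - inverse (g0 n N ?p j)" unfolding Y_def by (rule Ylim_coeff1[OF j])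
    also have "\<dots> = (-1) ^ m * D ^ (Suc m + 1) / (P1 * P2)"
      unfolding g by (rule inv_formula[OF Dnz P1nz P2nz])
    finally show "Y lam j $ 1 =
              (-1) ^ (n - 1) * (1 + beta * tt (Iidx n lam j)) ^ (n + 1)
              / ((\<Prod>i'\<in>Iset n lam. 1 + beta * tt i') *
                 (\<Prod>j'\<in>{1..N} - {Iidx n lam j}. ominus beta (tt (Iidx n lam j)) (tt j')))"
      unfolding P1' P2' D_def nm by simp
  qed
  have part3: "\<exists>j\<in>{1..n}. Y lam1 j \<noteq> Y lam2 j"
    if L1: "lam1 \<in> box_partitions n k" and L2: "lam2 \<in> box_partitions n k" and ne: "lam1 \<noteq> lam2" for lam1 lam2
  proof -
    obtain j where j: "j \<in> {1..n}" and d: "Iidx n lam1 j \<noteq> Iidx n lam2 j"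
      using Iidx_determines[OF L1 L2] ne by blast
    have "Y lam1 j $ 0 \<noteq> Y lam2 j $ 0" unfolding Y_def Ylim_0 using d tt_inj by blast
    then show ?thesis using j by metis
  qed
  show ?thesis using part1 part2 part3 by blast
qed


end
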